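(* Let $(L,\preceq,\bot,\top)$ be a bounded lattice with at least three elements and let $K$ be a block of $L$. If $(L\setminus K)\not\subseteq\{\bot,\top\}$, then $P=(L\setminus K)\cup\{\bot,\top\}$ is a complete block of $L$. Moreover, $L$ can be decomposed into the independent blocks $K$ and $P$, i.e. $K$ and $P$ are independent and $K\cup P=L$.
   Context: For $k\in L$ let ${\uparrow}k=\{x\in L\mid k\preceq x\}$ and ${\downarrow}k=\{x\in L\mid x\preceq k\}$. A block of $L$ is a sublattice $K\subsetneq L$ (a proper subset) such that $K\setminus\{\bot,\top\}\neq\varnothing$ and $({\uparrow}k\cup{\downarrow}k)\setminus\{\bot,\top\}\subseteq K$ for every $k\in K\setminus\{\bot,\top\}$. A block is complete if it contains $\bot$ and $\top$. Two blocks $K_1,K_2$ are independent if $K_1\cap K_2\subseteq\{\bot,\top\}$. *)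

theory Defs
  imports Main
begin

text \<open>The bounded lattice L is the whole carrier of a type of class bounded_lattice,
  ordered by (\<le>), with bot and top.\<close>

definition sublattice :: "'a::bounded_lattice set \<Rightarrow> bool" where
  "sublattice K \<longleftrightarrow> (\<forall>x\<in>K. \<forall>y\<in>K. inf x y \<in> K \<and> sup x y \<in> K)"

definition up_set :: "'a::bounded_lattice \<Rightarrow> 'a set" where
  "up_set k = {x. k \<le> x}"

definition down_set :: "'a::bounded_lattice \<Rightarrow> 'a set" where
  "down_set k = {x. x \<le> k}"

definition block :: "'a::bounded_lattice set \<Rightarrow> bool" where
  "block K \<longleftrightarrow> sublattice K \<and> K \<subset> UNIV \<and> K - {bot, top} \<noteq> {} \<and>
     (\<forall>k \<in> K - {bot, top}. (up_set k \<union> down_set k) - {bot, top} \<subseteq> K)"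

definition complete_block :: "'a::bounded_lattice set \<Rightarrow> bool" where
  "complete_block K \<longleftrightarrow> block K \<and> bot \<in> K \<and> top \<in> K"

definition independent_blocks :: "'a::bounded_lattice set \<Rightarrow> 'a set \<Rightarrow> bool" where
  "independent_blocks K1 K2 \<longleftrightarrow> K1 \<inter> K2 \<subseteq> {bot, top}"

end

theory Submission
  imports Defs
begin

theorem proposition21:
  fixes K :: "'a::bounded_lattice set"
  assumes three: "\<exists>a b c :: 'a. a \<noteq> b \<and> a \<noteq> c \<and> b \<noteq> c"
    and blk: "block K"
    and notsub: "\<not> (UNIV - K \<subseteq> {bot, top})"
  shows "complete_block ((UNIV - K) \<union> {bot, top})
         \<and> independent_blocks K ((UNIV - K) \<union> {bot, top})
         \<and> K \<union> ((UNIV - K) \<union> {bot, top}) = UNIV"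
proof -
  let ?P = "(UNIV - K) \<union> {bot, top}"
  have cl: "\<And>k x. k \<in> K \<Longrightarrow> k \<notin> {bot, top} \<Longrightarrow> (k \<le> x \<or> x \<le> k) \<Longrightarrow> x \<notin> {bot, top} \<Longrightarrow> x \<in> K"
    using blk unfolding block_def up_set_def down_set_def by blast
  obtain k where k: "k \<in> K" "k \<notin> {bot, top}" using blk unfolding block_def by blast
  have sub: "sublattice ?P"
    unfolding sublattice_def
  proof (intro ballI conjI)
    fix x y assume x: "x \<in> ?P" and y: "y \<in> ?P"
    show "inf x y \<in> ?P"
    proof (cases "x \<in> {bot, top} \<or> y \<in> {bot, top}")
      case True then show ?thesis using x y by (auto simp: inf.absorb1 inf.absorb2)
    next
      case False
      then have "x \<notin> K" using x by auto
      then show ?thesis using cl[of "inf x y" x] False by auto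
    qed
    show "sup x y \<in> ?P"
    proof (cases "x \<in> {bot, top} \<or> y \<in> {bot, top}")
      case True then show ?thesis using x y by (auto simp: sup.absorb1 sup.absorb2)
    next
      case False
      then have "x \<notin> K" using x by auto
      then show ?thesis using cl[of "sup x y" x] False by auto
    qed
  qed
  have "block ?P"
    unfolding block_def
  proof (intro conjI)
    show "sublattice ?P" by (rule sub)
    show "?P \<subset> UNIV" using k by auto
    show "?P - {bot, top} \<noteq> {}" using notsub by auto
    show "\<forall>p\<in>?P - {bot, top}. (up_set p \<union> down_set p) - {bot, top} \<subseteq> ?P"
      unfolding up_set_def down_set_def using cl by blast
  qed
  then show ?thesis unfolding complete_block_def independent_blocks_def by auto
qed

end
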